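(* Let $T$ be a countable tree without leaves (vertices of infinite degree allowed), $P=(p(x,y))$ a stochastic nearest-neighbour transition matrix on $T$, and $\lambda\in\mathbb C$. Suppose the oriented edges carry $\lambda$-weights $f(x,y)\in\mathbb C$ satisfying for every vertex $x$ and neighbour $y$: (i) $f(x,y)f(y,x)\neq1$; (ii) $u(x,x)=\sum_{v\sim x}p(x,v)f(v,x)$ converges absolutely and $u(x,x)\neq\lambda$; (iii) $\lambda f(x,y)=p(x,y)+\bigl(u(x,x)-p(x,y)f(y,x)\bigr)f(x,y)$. Extend $f$ to all pairs by $f(x,x)=1$ and multiplicatively along geodesics: $f(x,y)=\prod_{i=1}^k f(x_{i-1},x_i)$ if the geodesic from $x$ to $y$ is $[x_0,\dots,x_k]$. Define $g(x,y)=f(x,y)/(\lambda-u(y,y))$ for $x,y\in T$. Then for every $x\in T$ and every neighbour $y$ of $x$: $$g(x,x)p(x,y)=\frac{f(x,y)}{1-f(x,y)f(y,x)},\qquad g(x,x)g(y,y)=g(x,y)\Bigl(\frac1{p(x,y)}+g(y,x)\Bigr),$$ $$\lambda\,g(x,x)=1+\sum_{y:\,y\sim x}\frac{f(x,y)f(y,x)}{1-f(x,y)f(y,x)},$$ and when $x$ has infinite degree the last sum converges absolutely.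
   Context: A nearest-neighbour stochastic transition matrix means $p(x,y)>0$ iff $x\sim y$ and $\sum_y p(x,y)=1$ for all $x$. A leaf is a vertex of degree $1$. *)

theory Defs
  imports "HOL-Analysis.Analysis"
begin

definition is_walk :: "('a \<Rightarrow> 'a \<Rightarrow> bool) \<Rightarrow> 'a list \<Rightarrow> 'a \<Rightarrow> 'a \<Rightarrow> bool" where
  "is_walk E xs x y \<longleftrightarrow> xs \<noteq> [] \<and> hd xs = x \<and> last xs = y \<and>
     (\<forall>i. Suc i < length xs \<longrightarrow> E (xs ! i) (xs ! Suc i))"

text \<open>A geodesic from x to y: a path (no repeated vertices) from x to y.
  In a tree it exists and is unique.\<close>
definition is_geodesic :: "('a \<Rightarrow> 'a \<Rightarrow> bool) \<Rightarrow> 'a list \<Rightarrow> 'a \<Rightarrow> 'a \<Rightarrow> bool" where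
  "is_geodesic E xs x y \<longleftrightarrow> is_walk E xs x y \<and> distinct xs"

definition is_tree :: "('a \<Rightarrow> 'a \<Rightarrow> bool) \<Rightarrow> bool" where
  "is_tree E \<longleftrightarrow>
     (\<forall>x y. E x y \<longrightarrow> E y x) \<and> (\<forall>x. \<not> E x x) \<and>
     (\<forall>x y. \<exists>xs. is_walk E xs x y) \<and>
     \<not> (\<exists>xs. 3 \<le> length xs \<and> distinct xs \<and> is_walk E xs (hd xs) (last xs) \<and> E (last xs) (hd xs))"

definition is_leaf :: "('a \<Rightarrow> 'a \<Rightarrow> bool) \<Rightarrow> 'a \<Rightarrow> bool" where
  "is_leaf E x \<longleftrightarrow> card {y. E x y} = 1"

definition nn_stochastic :: "('a \<Rightarrow> 'a \<Rightarrow> bool) \<Rightarrow> ('a \<Rightarrow> 'a \<Rightarrow> real) \<Rightarrow> bool" where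
  "nn_stochastic E p \<longleftrightarrow> (\<forall>x y. p x y > 0 \<longleftrightarrow> E x y) \<and> (\<forall>x y. p x y \<ge> 0) \<and>
     (\<forall>x. (p x has_sum 1) UNIV)"

definition uxx :: "('a \<Rightarrow> 'a \<Rightarrow> bool) \<Rightarrow> ('a \<Rightarrow> 'a \<Rightarrow> real) \<Rightarrow> ('a \<Rightarrow> 'a \<Rightarrow> complex) \<Rightarrow> 'a \<Rightarrow> complex" where
  "uxx E p f x = (\<Sum>\<^sub>\<infinity>v\<in>{v. E x v}. complex_of_real (p x v) * f v x)"

definition fext :: "('a \<Rightarrow> 'a \<Rightarrow> bool) \<Rightarrow> ('a \<Rightarrow> 'a \<Rightarrow> complex) \<Rightarrow> 'a \<Rightarrow> 'a \<Rightarrow> complex" where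
  "fext E f x y = (let xs = (THE xs. is_geodesic E xs x y) in
      prod_list (map2 f xs (tl xs)))"

definition gfun :: "('a \<Rightarrow> 'a \<Rightarrow> bool) \<Rightarrow> ('a \<Rightarrow> 'a \<Rightarrow> real) \<Rightarrow> ('a \<Rightarrow> 'a \<Rightarrow> complex) \<Rightarrow> complex \<Rightarrow> 'a \<Rightarrow> 'a \<Rightarrow> complex" where
  "gfun E p f lam x y = fext E f x y / (lam - uxx E p f y)"

end

theory Submission
  imports Defs
begin

lemma distinct_hd_last_len1:
  assumes "distinct xs" "xs \<noteq> []" "hd xs = last xs"
  shows "length xs = 1"
proof (rule ccontr)
  assume "length xs \<noteq> 1"
  with assms(2) have l: "length xs \<ge> 2" by (cases xs) (auto simp: Suc_le_eq)
  have "xs ! 0 = xs ! (length xs - 1)"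
    using assms by (simp add: hd_conv_nth last_conv_nth)
  moreover have "0 \<noteq> length xs - 1" using l by simp
  moreover have "0 < length xs" "length xs - 1 < length xs" using l by auto
  ultimately show False using assms(1) nth_eq_iff_index_eq by metis
qed

lemma geod_self:
  "(THE xs. is_geodesic E xs x x) = [x]"
proof (rule the_equality)
  show "is_geodesic E [x] x x" by (simp add: is_geodesic_def is_walk_def)
next
  fix xs assume "is_geodesic E xs x x"
  hence d: "distinct xs" "xs \<noteq> []" "hd xs = x" "last xs = x"
    by (auto simp: is_geodesic_def is_walk_def)
  hence "length xs = 1" using distinct_hd_last_len1 by metis
  then obtain a where "xs = [a]" by (metis One_nat_def length_0_conv length_Suc_conv)
  thus "xs = [x]" using d by simp
qed

lemma fext_self: "fext E f x x = 1"
  by (simp add: fext_def geod_self)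

lemma geod_nb:
  assumes tree: "is_tree E" and e: "E x y"
  shows "(THE xs. is_geodesic E xs x y) = [x, y]"
proof (rule the_equality)
  show "is_geodesic E [x,y] x y" using tree e
    by (auto simp: is_geodesic_def is_walk_def is_tree_def nth_Cons split: nat.splits)
next
  fix xs assume g: "is_geodesic E xs x y"
  hence w: "is_walk E xs x y" and d: "distinct xs" by (auto simp: is_geodesic_def)
  hence ne: "xs \<noteq> []" and h: "hd xs = x" and l: "last xs = y" by (auto simp: is_walk_def)
  have xy: "x \<noteq> y" using tree e by (auto simp: is_tree_def)
  have yx: "E y x" using tree e by (auto simp: is_tree_def)
  have "length xs \<noteq> 1"
  proof
    assume "length xs = 1"
    then obtain a where "xs = [a]" by (metis One_nat_def length_0_conv length_Suc_conv)
    thus False using h l xy by simp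
  qed
  moreover have "\<not> 3 \<le> length xs"
  proof
    assume "3 \<le> length xs"
    hence "3 \<le> length xs \<and> distinct xs \<and> is_walk E xs (hd xs) (last xs) \<and> E (last xs) (hd xs)"
      using d w h l yx by simp
    thus False using tree unfolding is_tree_def by blast
  qed
  moreover have "length xs > 0" using ne by simp
  ultimately have "length xs = 2" by linarith
  then obtain a b where "xs = [a, b]"
    by (metis One_nat_def Suc_1 length_0_conv length_Suc_conv)
  thus "xs = [x, y]" using h l by simp
qed

lemma fext_nb: "is_tree E \<Longrightarrow> E x y \<Longrightarrow> fext E f x y = f x y"
  by (simp add: fext_def geod_nb)

theorem lemma3p2:
  fixes E :: "'a \<Rightarrow> 'a \<Rightarrow> bool" and p :: "'a \<Rightarrow> 'a \<Rightarrow> real"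
    and f :: "'a \<Rightarrow> 'a \<Rightarrow> complex" and lam :: complex
  assumes countV: "countable (UNIV :: 'a set)"
    and tree: "is_tree E"
    and noleaf: "\<And>x. \<not> is_leaf E x"
    and stoch: "nn_stochastic E p"
    and hi: "\<And>x y. E x y \<Longrightarrow> f x y * f y x \<noteq> 1"
    and hii_sum: "\<And>x. (\<lambda>v. norm (complex_of_real (p x v) * f v x)) summable_on {v. E x v}"
    and hii_ne: "\<And>x. uxx E p f x \<noteq> lam"
    and hiii: "\<And>x y. E x y \<Longrightarrow>
       lam * f x y = complex_of_real (p x y) + (uxx E p f x - complex_of_real (p x y) * f y x) * f x y"
  shows "(\<forall>x y. E x y \<longrightarrow>
      gfun E p f lam x x * complex_of_real (p x y) = f x y / (1 - f x y * f y x) \<and>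
      gfun E p f lam x x * gfun E p f lam y y
        = gfun E p f lam x y * (1 / complex_of_real (p x y) + gfun E p f lam y x))
    \<and> (\<forall>x. lam * gfun E p f lam x x
        = 1 + (\<Sum>\<^sub>\<infinity>y\<in>{y. E x y}. f x y * f y x / (1 - f x y * f y x)))
    \<and> (\<forall>x. infinite {y. E x y} \<longrightarrow>
        (\<lambda>y. norm (f x y * f y x / (1 - f x y * f y x))) summable_on {y. E x y})"
proof -
  have gxx: "gfun E p f lam x x = 1 / (lam - uxx E p f x)" for x
    by (simp add: gfun_def fext_self)
  have lu: "lam - uxx E p f x \<noteq> 0" for x using hii_ne[of x] by simp
  have pnz: "complex_of_real (p x y) \<noteq> 0" if "E x y" for x y
    using stoch that unfolding nn_stochastic_def by force
  have one: "1 - f x y * f y x \<noteq> 0" if "E x y" for x y using hi[OF that] by simp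
  have key: "(lam - uxx E p f x) * f x y = complex_of_real (p x y) * (1 - f x y * f y x)"
    if "E x y" for x y using hiii[OF that] by (simp add: algebra_simps)
  have A: "f x y / (1 - f x y * f y x) = complex_of_real (p x y) / (lam - uxx E p f x)"
    if "E x y" for x y using key[OF that] one[OF that] lu[of x]
    by (simp add: field_simps)
  have T: "f x y * f y x / (1 - f x y * f y x) = complex_of_real (p x y) * f y x / (lam - uxx E p f x)"
    if "E x y" for x y
  proof -
    have "f x y * f y x / (1 - f x y * f y x) = f y x * (f x y / (1 - f x y * f y x))" by simp
    also have "\<dots> = complex_of_real (p x y) * f y x / (lam - uxx E p f x)" using A[OF that] by simp
    finally show ?thesis .
  qed
  have P1: "\<forall>x y. E x y \<longrightarrow>
      gfun E p f lam x x * complex_of_real (p x y) = f x y / (1 - f x y * f y x) \<and>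
      gfun E p f lam x x * gfun E p f lam y y
        = gfun E p f lam x y * (1 / complex_of_real (p x y) + gfun E p f lam y x)"
  proof (intro allI impI conjI)
    fix x y assume e: "E x y"
    have yx: "E y x" using tree e by (auto simp: is_tree_def)
    show "gfun E p f lam x x * complex_of_real (p x y) = f x y / (1 - f x y * f y x)"
      using A[OF e] by (simp add: gxx)
    have k2: "f x y * (lam - uxx E p f x + complex_of_real (p x y) * f y x) = complex_of_real (p x y)"
      using hiii[OF e] by (simp add: algebra_simps)
    have gxy: "gfun E p f lam x y = f x y / (lam - uxx E p f y)"
      by (simp add: gfun_def fext_nb[OF tree e])
    have gyx: "gfun E p f lam y x = f y x / (lam - uxx E p f x)"
      by (simp add: gfun_def fext_nb[OF tree yx])
    show "gfun E p f lam x x * gfun E p f lam y y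
        = gfun E p f lam x y * (1 / complex_of_real (p x y) + gfun E p f lam y x)"
    proof -
      have "f x y / (lam - uxx E p f y) * (1 / complex_of_real (p x y) + f y x / (lam - uxx E p f x))
        = (f x y * (lam - uxx E p f x + complex_of_real (p x y) * f y x))
          / (complex_of_real (p x y) * (lam - uxx E p f x) * (lam - uxx E p f y))"
        using lu[of x] lu[of y] pnz[OF e] by (simp add: field_simps)
      also have "\<dots> = 1 / (lam - uxx E p f x) * (1 / (lam - uxx E p f y))"
        unfolding k2 using pnz[OF e] by simp
      finally show ?thesis unfolding gxy gyx gxx by simp
    qed
  qed
  have P2: "lam * gfun E p f lam x x
        = 1 + (\<Sum>\<^sub>\<infinity>y\<in>{y. E x y}. f x y * f y x / (1 - f x y * f y x))" for x
  proof -
    have "(\<Sum>\<^sub>\<infinity>y\<in>{y. E x y}. f x y * f y x / (1 - f x y * f y x))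
        = (\<Sum>\<^sub>\<infinity>y\<in>{y. E x y}. complex_of_real (p x y) * f y x * (1 / (lam - uxx E p f x)))"
      by (rule infsum_cong) (simp add: T)
    also have "\<dots> = uxx E p f x * (1 / (lam - uxx E p f x))"
      by (simp only: infsum_cmult_left' uxx_def)
    finally have s: "(\<Sum>\<^sub>\<infinity>y\<in>{y. E x y}. f x y * f y x / (1 - f x y * f y x))
        = uxx E p f x / (lam - uxx E p f x)" by simp
    show ?thesis unfolding s gxx using lu[of x] by (simp add: field_simps)
  qed
  have P3: "(\<lambda>y. norm (f x y * f y x / (1 - f x y * f y x))) summable_on {y. E x y}" for x
  proof -
    have "(\<lambda>y. norm (complex_of_real (p x y) * f y x) * (1 / norm (lam - uxx E p f x)))
        summable_on {y. E x y}"
      by (rule summable_on_cmult_left[OF hii_sum])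
    thus ?thesis
      by (rule summable_on_cong[THEN iffD1, rotated])
         (simp add: T norm_divide)
  qed
  show ?thesis using P1 P2 P3 by blast
qed

end
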